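(* Let $G$ be a finite group. Then $G/[\delta_i,G]$ is a nested group for every integer $i\ge 1$. Moreover, $G$ is nested if and only if $\delta_\infty=1$.
   Context: All groups are finite. For $\chi\in\mathrm{Irr}(G)$, the center of $\chi$ is $Z(\chi)=\{g\in G : |\chi(g)|=\chi(1)\}$. A group is nested if for any two of its irreducible characters $\chi,\psi$ either $Z(\chi)\le Z(\psi)$ or $Z(\psi)\le Z(\chi)$. For a normal subgroup $N$ of $G$, $\mathrm{Irr}(G\mid N)$ denotes the set of $\chi\in\mathrm{Irr}(G)$ with $N\not\le\ker(\chi)$. Define $\delta_1=G$ and $\delta_{i+1}=\prod_{\chi\in\mathrm{Irr}(G\mid[\delta_i,G])}Z(\chi)$ for $i\ge 1$, with the convention that an empty product is the trivial subgroup. This is a descending chain of normal subgroups which stabilizes; $\delta_\infty$ denotes its terminal term. *)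

theory Defs
  imports "HOL-Algebra.Algebra" "Jordan_Normal_Form.Matrix"
begin

definition mat_trace :: "complex mat \<Rightarrow> complex" where
  "mat_trace A = (\<Sum>i<dim_row A. A $$ (i, i))"

definition rep :: "('a, 'b) monoid_scheme \<Rightarrow> nat \<Rightarrow> ('a \<Rightarrow> complex mat) \<Rightarrow> bool" where
  "rep G n \<rho> \<longleftrightarrow>
     (\<forall>g\<in>carrier G. \<rho> g \<in> carrier_mat n n) \<and>
     (\<forall>g\<in>carrier G. \<forall>h\<in>carrier G. \<rho> (g \<otimes>\<^bsub>G\<^esub> h) = \<rho> g * \<rho> h) \<and>
     \<rho> \<one>\<^bsub>G\<^esub> = 1\<^sub>m n"

definition invariant_subspace ::
  "('a, 'b) monoid_scheme \<Rightarrow> nat \<Rightarrow> ('a \<Rightarrow> complex mat) \<Rightarrow> complex vec set \<Rightarrow> bool" where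
  "invariant_subspace G n \<rho> W \<longleftrightarrow>
     W \<subseteq> carrier_vec n \<and> 0\<^sub>v n \<in> W \<and>
     (\<forall>v\<in>W. \<forall>w\<in>W. v + w \<in> W) \<and>
     (\<forall>c. \<forall>v\<in>W. c \<cdot>\<^sub>v v \<in> W) \<and>
     (\<forall>g\<in>carrier G. \<forall>v\<in>W. \<rho> g *\<^sub>v v \<in> W)"

definition irr_rep :: "('a, 'b) monoid_scheme \<Rightarrow> nat \<Rightarrow> ('a \<Rightarrow> complex mat) \<Rightarrow> bool" where
  "irr_rep G n \<rho> \<longleftrightarrow> rep G n \<rho> \<and> n > 0 \<and>
     (\<forall>W. invariant_subspace G n \<rho> W \<longrightarrow> W = {0\<^sub>v n} \<or> W = carrier_vec n)"

definition Irr :: "('a, 'b) monoid_scheme \<Rightarrow> ('a \<Rightarrow> complex) set" where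
  "Irr G = {\<chi>. \<exists>n \<rho>. irr_rep G n \<rho> \<and>
               \<chi> = (\<lambda>g. if g \<in> carrier G then mat_trace (\<rho> g) else 0)}"

definition char_center :: "('a, 'b) monoid_scheme \<Rightarrow> ('a \<Rightarrow> complex) \<Rightarrow> 'a set" where
  "char_center G \<chi> = {g \<in> carrier G. cmod (\<chi> g) = cmod (\<chi> \<one>\<^bsub>G\<^esub>)}"

definition char_kernel :: "('a, 'b) monoid_scheme \<Rightarrow> ('a \<Rightarrow> complex) \<Rightarrow> 'a set" where
  "char_kernel G \<chi> = {g \<in> carrier G. \<chi> g = \<chi> \<one>\<^bsub>G\<^esub>}"

definition Irr_over :: "('a, 'b) monoid_scheme \<Rightarrow> 'a set \<Rightarrow> ('a \<Rightarrow> complex) set" where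
  "Irr_over G N = {\<chi> \<in> Irr G. \<not> N \<subseteq> char_kernel G \<chi>}"

definition nested_group :: "('a, 'b) monoid_scheme \<Rightarrow> bool" where
  "nested_group G \<longleftrightarrow> (\<forall>\<chi>\<in>Irr G. \<forall>\<psi>\<in>Irr G.
      char_center G \<chi> \<subseteq> char_center G \<psi> \<or> char_center G \<psi> \<subseteq> char_center G \<chi>)"

definition commutator_subgroup :: "('a, 'b) monoid_scheme \<Rightarrow> 'a set \<Rightarrow> 'a set \<Rightarrow> 'a set" where
  "commutator_subgroup G H K = generate G
     (\<Union>h\<in>H. \<Union>k\<in>K. {h \<otimes>\<^bsub>G\<^esub> k \<otimes>\<^bsub>G\<^esub> inv\<^bsub>G\<^esub> h \<otimes>\<^bsub>G\<^esub> inv\<^bsub>G\<^esub> k})"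

text \<open>delta G i is \<delta>_i for i \<ge> 1 (delta G 0 is set to carrier G as a dummy).
  The product of subgroups is the subgroup generated by their union; the empty
  product is generate G {} = {1}.\<close>
primrec delta :: "('a, 'b) monoid_scheme \<Rightarrow> nat \<Rightarrow> 'a set" where
  "delta G 0 = carrier G"
| "delta G (Suc i) = (if i = 0 then carrier G else
     generate G (\<Union>\<chi>\<in>Irr_over G (commutator_subgroup G (delta G i) (carrier G)).
                    char_center G \<chi>))"

definition delta_inf :: "('a, 'b) monoid_scheme \<Rightarrow> 'a set" where
  "delta_inf G = delta G (LEAST k. 1 \<le> k \<and> (\<forall>j\<ge>k. delta G j = delta G k))"

end

theory Submission
  imports Defs "Jordan_Normal_Form.Schur_Decomposition"
begin

lemma assoc5: fixes A B C D E :: "'a::semiring_1 mat"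
  assumes "A \<in> carrier_mat n n" "B \<in> carrier_mat n n" "C \<in> carrier_mat n n" "D \<in> carrier_mat n n" "E \<in> carrier_mat n n"
  shows "A * (B * C * D) * E = (A * B) * C * (D * E)"
proof -
  have "A * (B * C * D) * E = A * (B * (C * (D * E)))" using assms by (simp add: assoc_mult_mat[of _ n n _ n _ n] mult_carrier_mat)
  also have "(A * B) * C * (D * E) = A * (B * (C * (D * E)))" using assms by (simp add: assoc_mult_mat[of _ n n _ n _ n] mult_carrier_mat)
  finally show ?thesis by simp
qed

lemma mat_trace_mult_comm:
  fixes A B :: "complex mat"
  assumes A: "A \<in> carrier_mat n k" and B: "B \<in> carrier_mat k n"
  shows "mat_trace (A * B) = mat_trace (B * A)"
proof -
  have "mat_trace (A * B) = (\<Sum>i<n. \<Sum>j<k. A $$ (i,j) * B $$ (j,i))"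
    using A B unfolding mat_trace_def
    by (auto simp: scalar_prod_def atLeast0LessThan intro!: sum.cong)
  also have "\<dots> = (\<Sum>j<k. \<Sum>i<n. B $$ (j,i) * A $$ (i,j))"
    by (subst sum.swap) (simp add: mult.commute)
  also have "\<dots> = mat_trace (B * A)"
    using A B unfolding mat_trace_def
    by (auto simp: scalar_prod_def atLeast0LessThan intro!: sum.cong)
  finally show ?thesis .
qed

lemma ut_mult:
  fixes A B :: "complex mat"
  assumes A: "A \<in> carrier_mat n n" and B: "B \<in> carrier_mat n n"
    and uA: "upper_triangular A" and uB: "upper_triangular B"
  shows "upper_triangular (A * B)" "\<And>i. i < n \<Longrightarrow> (A * B) $$ (i,i) = A $$ (i,i) * B $$ (i,i)"
proof -
  show "upper_triangular (A * B)"
  proof (rule upper_triangularI)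
    fix i j assume ji: "j < i" and i: "i < dim_row (A * B)"
    have "(A * B) $$ (i,j) = (\<Sum>l\<in>{0..<n}. A $$ (i,l) * B $$ (l,j))"
      using A B i ji by (auto simp: scalar_prod_def)
    also have "\<dots> = 0"
    proof (rule sum.neutral, intro ballI)
      fix l assume l: "l \<in> {0..<n}"
      show "A $$ (i,l) * B $$ (l,j) = 0"
      proof (cases "l < i")
        case True thus ?thesis using uA A i by (auto dest!: upper_triangularD)
      next
        case False
        hence "j < l" using ji by auto
        hence "B $$ (l,j) = 0" using upper_triangularD[OF uB, of j l] B l by auto
        thus ?thesis by simp
      qed
    qed
    finally show "(A * B) $$ (i,j) = 0" .
  qed
  fix i assume i: "i < n"
  have "(A * B) $$ (i,i) = (\<Sum>l\<in>{0..<n}. A $$ (i,l) * B $$ (l,i))"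
    using A B i by (auto simp: scalar_prod_def)
  also have "\<dots> = A $$ (i,i) * B $$ (i,i) + (\<Sum>l\<in>{0..<n}-{i}. A $$ (i,l) * B $$ (l,i))"
    by (rule sum.remove) (use i in auto)
  also have "(\<Sum>l\<in>{0..<n}-{i}. A $$ (i,l) * B $$ (l,i)) = 0"
  proof (rule sum.neutral, intro ballI)
    fix l assume l: "l \<in> {0..<n}-{i}"
    show "A $$ (i,l) * B $$ (l,i) = 0"
    proof (cases "l < i")
      case True thus ?thesis using uA A i by (auto dest!: upper_triangularD)
    next
      case False
      hence "i < l" using l by auto
      hence "B $$ (l,i) = 0" using upper_triangularD[OF uB, of i l] B l by auto
      thus ?thesis by simp
    qed
  qed
  finally show "(A * B) $$ (i,i) = A $$ (i,i) * B $$ (i,i)" by simp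
qed

lemma ut_pow:
  fixes B :: "complex mat"
  assumes B: "B \<in> carrier_mat n n" and uB: "upper_triangular B"
  shows "upper_triangular (B ^\<^sub>m k) \<and> (\<forall>i<n. (B ^\<^sub>m k) $$ (i,i) = B $$ (i,i) ^ k)"
proof (induct k)
  case 0 thus ?case using B by auto
next
  case (Suc k)
  have P: "B ^\<^sub>m k \<in> carrier_mat n n" using B by auto
  show ?case using ut_mult[OF P B _ uB] Suc by auto
qed

lemma unit_sum_eq:
  fixes d :: "nat \<Rightarrow> complex"
  assumes n: "n > 0" and d: "\<And>i. i < n \<Longrightarrow> cmod (d i) = 1"
    and s: "cmod (\<Sum>i<n. d i) = real n"
  shows "\<And>i. i < n \<Longrightarrow> d i = (\<Sum>i<n. d i) / of_nat n"
proof -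
  define s where "s = (\<Sum>i<n. d i)"
  define u where "u = s / of_nat n"
  have cu: "cmod u = 1" using s n unfolding u_def s_def by (simp add: norm_divide)
  have "(\<Sum>i<n. Re (d i * cnj u)) = Re (s * cnj u)"
    unfolding s_def by (simp add: sum_distrib_right Re_sum)
  also have "s * cnj u = of_nat n * (u * cnj u)" unfolding u_def using n by simp
  also have "u * cnj u = 1" using cu by (metis complex_norm_square mult.commute of_real_1 power_one)
  finally have sumre: "(\<Sum>i<n. Re (d i * cnj u)) = real n" by simp
  have le: "\<And>i. i < n \<Longrightarrow> Re (d i * cnj u) \<le> 1"
  proof -
    fix i assume i: "i < n"
    have "Re (d i * cnj u) \<le> cmod (d i * cnj u)" by (rule complex_Re_le_cmod)
    also have "\<dots> = 1" using d[OF i] cu by (simp add: norm_mult)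
    finally show "Re (d i * cnj u) \<le> 1" .
  qed
  have eq1: "\<And>i. i < n \<Longrightarrow> Re (d i * cnj u) = 1"
  proof (rule ccontr)
    fix i assume i: "i < n" and ne: "Re (d i * cnj u) \<noteq> 1"
    hence lt: "Re (d i * cnj u) < 1" using le[OF i] by auto
    have "(\<Sum>j<n. Re (d j * cnj u)) < (\<Sum>j<n. (1::real))"
      by (rule sum_strict_mono_ex1) (use le lt i in auto)
    thus False using sumre by simp
  qed
  fix i assume i: "i < n"
  have c1: "cmod (d i * cnj u) = 1" using d[OF i] cu by (simp add: norm_mult)
  have r1: "Re (d i * cnj u) = 1" using eq1[OF i] .
  have "Im (d i * cnj u) = 0"
  proof -
    have "(cmod (d i * cnj u))^2 = (Re (d i * cnj u))^2 + (Im (d i * cnj u))^2"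
      by (simp add: cmod_power2)
    thus ?thesis using c1 r1 by simp
  qed
  hence "d i * cnj u = 1" using r1 by (simp add: complex_eq_iff)
  have "d i = d i * (u * cnj u)" using \<open>u * cnj u = 1\<close> by simp
  also have "\<dots> = (d i * cnj u) * u" by (simp add: ac_simps)
  also have "\<dots> = u" using \<open>d i * cnj u = 1\<close> by simp
  finally have "d i = u" .
  thus "d i = (\<Sum>i<n. d i) / of_nat n" unfolding u_def s_def .
qed

primrec Ssum :: "complex mat \<Rightarrow> complex \<Rightarrow> nat \<Rightarrow> nat \<Rightarrow> complex mat" where
  "Ssum B c n 0 = 0\<^sub>m n n"
| "Ssum B c n (Suc k) = c \<cdot>\<^sub>m Ssum B c n k + B ^\<^sub>m k"

lemma Ssum_carrier: "B \<in> carrier_mat n n \<Longrightarrow> Ssum B c n k \<in> carrier_mat n n"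
  by (induct k) auto

lemma Ssum_ut:
  assumes B: "B \<in> carrier_mat n n" and uB: "upper_triangular B"
    and dB: "\<And>i. i < n \<Longrightarrow> B $$ (i,i) = c"
  shows "upper_triangular (Ssum B c n k) \<and> (\<forall>i<n. Ssum B c n k $$ (i,i) = of_nat k * c ^ (k - 1))"
proof (induct k)
  case 0 thus ?case by auto
next
  case (Suc k)
  have S: "Ssum B c n k \<in> carrier_mat n n" using Ssum_carrier[OF B] .
  have P: "B ^\<^sub>m k \<in> carrier_mat n n" using B by auto
  have uP: "upper_triangular (B ^\<^sub>m k)" and dP: "\<And>i. i < n \<Longrightarrow> (B ^\<^sub>m k) $$ (i,i) = c ^ k"
    using ut_pow[OF B uB, of k] dB by auto
  have ut: "upper_triangular (Ssum B c n (Suc k))"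
  proof (rule upper_triangularI)
    fix i j assume ji: "j < i" and i: "i < dim_row (Ssum B c n (Suc k))"
    hence i': "i < n" using S P by auto
    have "Ssum B c n k $$ (i,j) = 0" using Suc ji i' S by (auto dest!: upper_triangularD)
    moreover have "(B ^\<^sub>m k) $$ (i,j) = 0" using uP ji i' P by (auto dest!: upper_triangularD)
    moreover have "j < n" using ji i' by simp
    ultimately show "Ssum B c n (Suc k) $$ (i,j) = 0" using carrier_matD[OF S] carrier_matD[OF P] i' ji by simp
  qed
  have "\<forall>i<n. Ssum B c n (Suc k) $$ (i,i) = of_nat (Suc k) * c ^ (Suc k - 1)"
  proof (intro allI impI)
    fix i assume i: "i < n"
    have "Ssum B c n (Suc k) $$ (i,i) = c * (of_nat k * c ^ (k - 1)) + c ^ k"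
      using Suc i carrier_matD[OF S] carrier_matD[OF P] dP[OF i] by auto
    also have "\<dots> = of_nat (Suc k) * c ^ (Suc k - 1)"
      by (cases k) (auto simp: algebra_simps)
    finally show "Ssum B c n (Suc k) $$ (i,i) = of_nat (Suc k) * c ^ (Suc k - 1)" .
  qed
  with ut show ?case by blast
qed

lemma Ssum_id:
  assumes B: "B \<in> carrier_mat n n"
  shows "Ssum B c n k * (B - c \<cdot>\<^sub>m 1\<^sub>m n) = B ^\<^sub>m k - c ^ k \<cdot>\<^sub>m 1\<^sub>m n"
proof (induct k)
  case 0
  show ?case using B by (intro eq_matI) (auto simp: scalar_prod_def)
next
  case (Suc k)
  have S: "Ssum B c n k \<in> carrier_mat n n" using Ssum_carrier[OF B] .
  have P: "B ^\<^sub>m k \<in> carrier_mat n n" using B by auto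
  have M: "B - c \<cdot>\<^sub>m 1\<^sub>m n \<in> carrier_mat n n" using B by auto
  have "Ssum B c n (Suc k) * (B - c \<cdot>\<^sub>m 1\<^sub>m n)
     = (c \<cdot>\<^sub>m Ssum B c n k) * (B - c \<cdot>\<^sub>m 1\<^sub>m n) + B ^\<^sub>m k * (B - c \<cdot>\<^sub>m 1\<^sub>m n)"
    using add_mult_distrib_mat[OF smult_carrier_mat[OF S] P M] by simp
  also have "(c \<cdot>\<^sub>m Ssum B c n k) * (B - c \<cdot>\<^sub>m 1\<^sub>m n) = c \<cdot>\<^sub>m (B ^\<^sub>m k - c ^ k \<cdot>\<^sub>m 1\<^sub>m n)"
    using S M Suc by (simp add: mult_smult_assoc_mat)
  also have "B ^\<^sub>m k * (B - c \<cdot>\<^sub>m 1\<^sub>m n) = B ^\<^sub>m k * B - c \<cdot>\<^sub>m B ^\<^sub>m k"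
    using mult_minus_distrib_mat[OF P B smult_carrier_mat[OF one_carrier_mat]] mult_smult_distrib[OF P one_carrier_mat] right_mult_one_mat[OF P] P by simp
  also have "B ^\<^sub>m k * B = B ^\<^sub>m Suc k" by simp
  finally show ?case using B P
    by (intro eq_matI) (auto simp: algebra_simps)
qed

lemma finite_order_trace_scalar:
  fixes A :: "complex mat"
  assumes A: "A \<in> carrier_mat n n" and m: "m > 0" and Am: "A ^\<^sub>m m = 1\<^sub>m n"
    and tr: "cmod (mat_trace A) = real n"
  shows "\<exists>c. A = c \<cdot>\<^sub>m 1\<^sub>m n \<and> c ^ m = 1"
proof (cases "n = 0")
  case True
  thus ?thesis using A by (intro exI[of _ 1]) auto
next
  case False
  hence n: "n > 0" by auto
  obtain es where es: "char_poly A = (\<Prod>a\<leftarrow>es. [:- a, 1:])"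
    using char_poly_factorized[OF A] by auto
  obtain B P Q where sch: "schur_decomposition A es = (B,P,Q)" by (cases "schur_decomposition A es") auto
  from schur_decomposition[OF A es sch]
  have sw: "similar_mat_wit A B P Q" and uB: "upper_triangular B" by auto
  from sw A have B: "B \<in> carrier_mat n n" and P: "P \<in> carrier_mat n n" and Q: "Q \<in> carrier_mat n n"
    and PQ: "P * Q = 1\<^sub>m n" and QP: "Q * P = 1\<^sub>m n" and APBQ: "A = P * B * Q"
    unfolding similar_mat_wit_def Let_def by auto
  have "A ^\<^sub>m m = P * B ^\<^sub>m m * Q" by (rule similar_mat_wit_pow_id[OF sw])
  hence "Q * (P * B ^\<^sub>m m * Q) * P = Q * 1\<^sub>m n * P" using Am by simp
  also have "Q * 1\<^sub>m n * P = 1\<^sub>m n" using Q P QP by simp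
  also have "Q * (P * B ^\<^sub>m m * Q) * P = (Q * P) * B ^\<^sub>m m * (Q * P)"
    using assoc5[OF Q P _ Q P] B by simp
  also have "\<dots> = B ^\<^sub>m m" using QP B by simp
  finally have Bm: "B ^\<^sub>m m = 1\<^sub>m n" .
  define d where "d i = B $$ (i,i)" for i
  have dm: "\<And>i. i < n \<Longrightarrow> d i ^ m = 1"
  proof -
    fix i assume i: "i < n"
    have "(B ^\<^sub>m m) $$ (i,i) = d i ^ m" using ut_pow[OF B uB, of m] i unfolding d_def by auto
    thus "d i ^ m = 1" using Bm i by simp
  qed
  have dn: "\<And>i. i < n \<Longrightarrow> cmod (d i) = 1"
  proof -
    fix i assume i: "i < n"
    have "cmod (d i) ^ m = 1" using dm[OF i] by (metis norm_one norm_power)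
    thus "cmod (d i) = 1" using m by (intro power_eq_imp_eq_base[of _ m 1]) auto
  qed
  have trAB: "mat_trace A = mat_trace B"
  proof -
    have "mat_trace A = mat_trace (P * (B * Q))" using APBQ P B Q by simp
    also have "\<dots> = mat_trace ((B * Q) * P)" using P B Q by (intro mat_trace_mult_comm) auto
    also have "(B * Q) * P = B" using P B Q QP by simp
    finally show ?thesis .
  qed
  have trB: "mat_trace B = (\<Sum>i<n. d i)" unfolding mat_trace_def d_def using B by simp
  define c where "c = (\<Sum>i<n. d i) / of_nat n"
  have dc: "\<And>i. i < n \<Longrightarrow> d i = c"
    using unit_sum_eq[OF n dn] tr trAB trB unfolding c_def by auto
  have cm: "c ^ m = 1" using dm[OF n] dc[OF n] by simp
  have c0: "c \<noteq> 0" using cm m by (metis power_0_left less_not_refl zero_neq_one)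
  let ?S = "Ssum B c n m"
  have S: "?S \<in> carrier_mat n n" using Ssum_carrier[OF B] .
  have Sut: "upper_triangular ?S" and Sd: "\<And>i. i < n \<Longrightarrow> ?S $$ (i,i) = of_nat m * c ^ (m - 1)"
    using Ssum_ut[OF B uB, of c m] dc unfolding d_def by auto
  have "det ?S = prod_list (diag_mat ?S)" by (rule det_upper_triangular[OF Sut S])
  also have "diag_mat ?S = replicate n (of_nat m * c ^ (m - 1))"
    using S Sd by (intro nth_equalityI) (auto simp: diag_mat_def)
  finally have "det ?S = (of_nat m * c ^ (m - 1)) ^ n" by simp
  hence detS: "det ?S \<noteq> 0" using m c0 by simp
  from det_non_zero_imp_unit[OF S detS, of "()"]
  obtain S' where S': "S' \<in> carrier_mat n n" and S'S: "S' * ?S = 1\<^sub>m n"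
    unfolding Units_def ring_mat_def by auto
  have "?S * (B - c \<cdot>\<^sub>m 1\<^sub>m n) = 0\<^sub>m n n"
    using Ssum_id[OF B, of c m] Bm cm by (intro eq_matI) auto
  hence "S' * (?S * (B - c \<cdot>\<^sub>m 1\<^sub>m n)) = 0\<^sub>m n n" using S' by simp
  hence "(S' * ?S) * (B - c \<cdot>\<^sub>m 1\<^sub>m n) = 0\<^sub>m n n" using S' S B
    by (subst assoc_mult_mat[of _ n n _ n _ n]) auto
  hence "B - c \<cdot>\<^sub>m 1\<^sub>m n = 0\<^sub>m n n" using S'S B by simp
  hence Bc: "B = c \<cdot>\<^sub>m 1\<^sub>m n" using B by (intro eq_matI) (auto dest!: fun_cong simp: mat_eq_iff)
  have "A = P * (c \<cdot>\<^sub>m 1\<^sub>m n) * Q" using APBQ Bc by simp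
  also have "\<dots> = c \<cdot>\<^sub>m (P * Q)"
    using mult_smult_distrib[OF P one_carrier_mat] right_mult_one_mat[OF P] mult_smult_assoc_mat[OF P Q] by simp
  also have "\<dots> = c \<cdot>\<^sub>m 1\<^sub>m n" using PQ by simp
  finally show ?thesis using cm by blast
qed

lemma schur_scalar:
  assumes irr: "irr_rep G n \<rho>" and A: "A \<in> carrier_mat n n"
    and comm: "\<And>g. g \<in> carrier G \<Longrightarrow> A * \<rho> g = \<rho> g * A"
  shows "\<exists>e. A = e \<cdot>\<^sub>m 1\<^sub>m n"
proof -
  from irr have n: "n > 0" and rep: "rep G n \<rho>"
    and irrW: "\<And>W. invariant_subspace G n \<rho> W \<Longrightarrow> W = {0\<^sub>v n} \<or> W = carrier_vec n"
    unfolding irr_rep_def by auto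
  have rhoC: "\<And>g. g \<in> carrier G \<Longrightarrow> \<rho> g \<in> carrier_mat n n" using rep unfolding rep_def by auto
  obtain es where es: "char_poly A = (\<Prod>a\<leftarrow>es. [:- a, 1:])" and len: "length es = n"
    using char_poly_factorized[OF A] by auto
  define e where "e = es ! 0"
  have "e \<in> set es" using n len unfolding e_def by auto
  hence "poly (char_poly A) e = 0" unfolding es
    by (induct es) auto
  hence "eigenvalue A e" using eigenvalue_root_char_poly[OF A] by auto
  then obtain v where ev: "eigenvector A v e" unfolding eigenvalue_def by auto
  hence v: "v \<in> carrier_vec n" "v \<noteq> 0\<^sub>v n" "A *\<^sub>v v = e \<cdot>\<^sub>v v"
    unfolding eigenvector_def using A by auto
  define W where "W = {w \<in> carrier_vec n. A *\<^sub>v w = e \<cdot>\<^sub>v w}"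
  have inv: "invariant_subspace G n \<rho> W"
    unfolding invariant_subspace_def
  proof (intro conjI ballI allI)
    show "W \<subseteq> carrier_vec n" unfolding W_def by auto
    show "0\<^sub>v n \<in> W" unfolding W_def using A by (auto intro!: eq_vecI simp: scalar_prod_def)
  next
    fix x y assume x: "x \<in> W" and y: "y \<in> W"
    thus "x + y \<in> W" unfolding W_def using A
      by (auto simp: mult_add_distrib_mat_vec smult_add_distrib_vec)
  next
    fix c x assume x: "x \<in> W"
    thus "c \<cdot>\<^sub>v x \<in> W" unfolding W_def using A
      by (auto simp: mult_mat_vec smult_smult_assoc mult.commute)
  next
    fix g x assume g: "g \<in> carrier G" and x: "x \<in> W"
    have x': "x \<in> carrier_vec n" "A *\<^sub>v x = e \<cdot>\<^sub>v x" using x unfolding W_def by auto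
    have R: "\<rho> g \<in> carrier_mat n n" using rhoC[OF g] .
    have "A *\<^sub>v (\<rho> g *\<^sub>v x) = (A * \<rho> g) *\<^sub>v x" using A R x' by (simp add: assoc_mult_mat_vec)
    also have "\<dots> = (\<rho> g * A) *\<^sub>v x" using comm[OF g] by simp
    also have "\<dots> = \<rho> g *\<^sub>v (e \<cdot>\<^sub>v x)" using A R x' by (simp add: assoc_mult_mat_vec)
    also have "\<dots> = e \<cdot>\<^sub>v (\<rho> g *\<^sub>v x)" using R x' by (simp add: mult_mat_vec)
    finally show "\<rho> g *\<^sub>v x \<in> W" unfolding W_def using R x' by auto
  qed
  have "v \<in> W" using v unfolding W_def by auto
  hence WC: "W = carrier_vec n" using irrW[OF inv] v by auto
  have "A = e \<cdot>\<^sub>m 1\<^sub>m n"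
  proof (rule eq_matI)
    fix i j assume i: "i < dim_row (e \<cdot>\<^sub>m 1\<^sub>m n)" and j: "j < dim_col (e \<cdot>\<^sub>m 1\<^sub>m n)"
    hence i: "i < n" and j: "j < n" by auto
    have "unit_vec n j \<in> W" using WC by auto
    hence eq: "A *\<^sub>v unit_vec n j = e \<cdot>\<^sub>v unit_vec n j" unfolding W_def by auto
    have "(A *\<^sub>v unit_vec n j) $ i = A $$ (i,j)"
    proof -
      have "(A *\<^sub>v unit_vec n j) $ i = (\<Sum>l\<in>{0..<n}. A $$ (i,l) * (if l = j then 1 else 0))"
        using A i j by (auto simp: scalar_prod_def intro!: sum.cong)
      also have "\<dots> = A $$ (i,j)" using j by (simp add: if_distrib cong: if_cong)
      finally show ?thesis .
    qed
    hence "A $$ (i,j) = e * (if i = j then 1 else 0)" using eq i j by simp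
    thus "A $$ (i,j) = (e \<cdot>\<^sub>m 1\<^sub>m n) $$ (i,j)" using i j by simp
  qed (use A in auto)
  thus ?thesis by blast
qed

definition chr :: "('a, 'b) monoid_scheme \<Rightarrow> ('a \<Rightarrow> complex mat) \<Rightarrow> 'a \<Rightarrow> complex" where
  "chr G \<rho> = (\<lambda>g. if g \<in> carrier G then mat_trace (\<rho> g) else 0)"

lemma IrrE: "\<chi> \<in> Irr G \<Longrightarrow> \<exists>n \<rho>. irr_rep G n \<rho> \<and> \<chi> = chr G \<rho>"
  unfolding Irr_def chr_def by auto

lemma trace_smult_one: "mat_trace (c \<cdot>\<^sub>m 1\<^sub>m n) = c * of_nat n"
  unfolding mat_trace_def by simp

lemma pow_smult_one: "(c \<cdot>\<^sub>m 1\<^sub>m n) ^\<^sub>m k = c ^ k \<cdot>\<^sub>m 1\<^sub>m n"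
proof (induct k)
  case 0 thus ?case by (intro eq_matI) auto
next
  case (Suc k) thus ?case by (intro eq_matI) (auto simp: scalar_prod_def sum.delta' if_distrib power_commutes cong: if_cong)
qed

lemma one_smult_mat' [simp]: "(1::'a::semiring_1) \<cdot>\<^sub>m A = A"
  by (intro eq_matI) auto

lemma smult_one_mult:
  fixes Y :: "complex mat"
  assumes Y: "Y \<in> carrier_mat n n"
  shows "(c \<cdot>\<^sub>m 1\<^sub>m n) * Y = c \<cdot>\<^sub>m Y" "Y * (c \<cdot>\<^sub>m 1\<^sub>m n) = c \<cdot>\<^sub>m Y"
  using mult_smult_assoc_mat[OF one_carrier_mat Y] mult_smult_distrib[OF Y one_carrier_mat] Y by auto

context
  fixes G :: "('a, 'b) monoid_scheme" and n \<rho>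
  assumes grp: "group G" and rep: "rep G n \<rho>"
begin

lemma rep_carrier: "g \<in> carrier G \<Longrightarrow> \<rho> g \<in> carrier_mat n n"
  using rep unfolding rep_def by auto
lemma rep_mult: "g \<in> carrier G \<Longrightarrow> h \<in> carrier G \<Longrightarrow> \<rho> (g \<otimes>\<^bsub>G\<^esub> h) = \<rho> g * \<rho> h"
  using rep unfolding rep_def by auto
lemma rep_one: "\<rho> \<one>\<^bsub>G\<^esub> = 1\<^sub>m n"
  using rep unfolding rep_def by auto
lemma rep_inv: assumes g: "g \<in> carrier G"
  shows "\<rho> (inv\<^bsub>G\<^esub> g) * \<rho> g = 1\<^sub>m n" "\<rho> g * \<rho> (inv\<^bsub>G\<^esub> g) = 1\<^sub>m n"
proof -
  interpret group G by (rule grp)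
  show "\<rho> (inv\<^bsub>G\<^esub> g) * \<rho> g = 1\<^sub>m n" using rep_mult[of "inv\<^bsub>G\<^esub> g" g] g rep_one by simp
  show "\<rho> g * \<rho> (inv\<^bsub>G\<^esub> g) = 1\<^sub>m n" using rep_mult[of g "inv\<^bsub>G\<^esub> g"] g rep_one by simp
qed
lemma rep_pow: assumes g: "g \<in> carrier G" shows "\<rho> (g [^]\<^bsub>G\<^esub> (k::nat)) = \<rho> g ^\<^sub>m k"
proof (induct k)
  case 0 thus ?case using rep_one rep_carrier[OF g] by simp
next
  case (Suc k)
  interpret group G by (rule grp)
  show ?case using Suc rep_mult[of "g [^]\<^bsub>G\<^esub> k" g] g by simp
qed

lemma rep_order: assumes fin: "finite (carrier G)" and g: "g \<in> carrier G"
  shows "\<rho> g ^\<^sub>m Coset.order G = 1\<^sub>m n" "Coset.order G > 0"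
proof -
  interpret group G by (rule grp)
  show "\<rho> g ^\<^sub>m Coset.order G = 1\<^sub>m n" using rep_pow[OF g, of "Coset.order G"] pow_order_eq_1[OF g] rep_one by simp
  show "Coset.order G > 0" using fin order_gt_0_iff_finite by auto
qed

lemma chr_one: "chr G \<rho> \<one>\<^bsub>G\<^esub> = of_nat n"
proof -
  interpret group G by (rule grp)
  show ?thesis unfolding chr_def using rep_one trace_smult_one[of 1 n] by simp
qed

lemma kernel_chr: assumes fin: "finite (carrier G)"
  shows "char_kernel G (chr G \<rho>) = {g \<in> carrier G. \<rho> g = 1\<^sub>m n}"
proof -
  interpret group G by (rule grp)
  have H: "\<rho> g = 1\<^sub>m n" if g: "g \<in> carrier G" and t: "mat_trace (\<rho> g) = of_nat n" for g
  proof (cases "n = 0")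
    case True thus ?thesis using rep_carrier[OF g] by (intro eq_matI) auto
  next
    case False
    obtain c where c: "\<rho> g = c \<cdot>\<^sub>m 1\<^sub>m n"
      using finite_order_trace_scalar[OF rep_carrier[OF g] rep_order(2)[OF fin g] rep_order(1)[OF fin g]] t
      by auto
    have "c * of_nat n = of_nat n" using t unfolding c trace_smult_one .
    hence "c = 1" using False by simp
    thus ?thesis using c by simp
  qed
  have M: "mat_trace (1\<^sub>m n) = of_nat n" using trace_smult_one[of 1 n] by simp
  have key: "(chr G \<rho> g = of_nat n) = (\<rho> g = 1\<^sub>m n)" if g: "g \<in> carrier G" for g
  proof -
    have "chr G \<rho> g = mat_trace (\<rho> g)" using g unfolding chr_def by simp
    thus ?thesis using H[OF g] M by metis
  qed
  show ?thesis unfolding char_kernel_def chr_one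
  proof (rule Set.set_eqI)
    fix g
    show "(g \<in> {g \<in> carrier G. chr G \<rho> g = of_nat n}) = (g \<in> {g \<in> carrier G. \<rho> g = 1\<^sub>m n})"
      using key[of g] by blast
  qed
qed

lemma center_chr: assumes fin: "finite (carrier G)"
  shows "char_center G (chr G \<rho>) = {g \<in> carrier G. \<exists>c. \<rho> g = c \<cdot>\<^sub>m 1\<^sub>m n}"
proof -
  interpret group G by (rule grp)
  have A1: "\<exists>c. \<rho> g = c \<cdot>\<^sub>m 1\<^sub>m n" if g: "g \<in> carrier G" and t: "cmod (mat_trace (\<rho> g)) = real n" for g
    using finite_order_trace_scalar[OF rep_carrier[OF g] rep_order(2)[OF fin g] rep_order(1)[OF fin g]] t
    by auto
  have A2: "cmod (mat_trace (\<rho> g)) = real n" if g: "g \<in> carrier G" and c: "\<rho> g = c \<cdot>\<^sub>m 1\<^sub>m n" for g c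
  proof (cases "n = 0")
    case True thus ?thesis using c trace_smult_one by simp
  next
    case False
    have "(c \<cdot>\<^sub>m 1\<^sub>m n) ^\<^sub>m Coset.order G = 1\<^sub>m n" using rep_order(1)[OF fin g] c by simp
    hence "(c ^ Coset.order G \<cdot>\<^sub>m 1\<^sub>m n) $$ (0,0) = 1\<^sub>m n $$ (0,0)" unfolding pow_smult_one by simp
    hence "c ^ Coset.order G = 1" using False by simp
    hence "cmod c ^ Coset.order G = 1" by (metis norm_one norm_power)
    hence "cmod c = 1" using rep_order(2)[OF fin g] by (intro power_eq_imp_eq_base[of _ "Coset.order G" 1]) auto
    thus ?thesis using c trace_smult_one by (simp add: norm_mult)
  qed
  have A3: "cmod (chr G \<rho> \<one>\<^bsub>G\<^esub>) = real n" using chr_one by simp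
  have e: "\<And>g. g \<in> carrier G \<Longrightarrow> chr G \<rho> g = mat_trace (\<rho> g)" unfolding chr_def by simp
  have "\<forall>g\<in>carrier G. (cmod (chr G \<rho> g) = real n) = (\<exists>c. \<rho> g = c \<cdot>\<^sub>m 1\<^sub>m n)"
  proof
    fix g assume g: "g \<in> carrier G"
    show "(cmod (chr G \<rho> g) = real n) = (\<exists>c. \<rho> g = c \<cdot>\<^sub>m 1\<^sub>m n)"
      unfolding e[OF g] using A1[OF g] A2[OF g] by blast
  qed
  thus ?thesis unfolding char_center_def A3 by blast
qed

end

lemma (in group) cancel_aux [simp]:
  assumes "x \<in> carrier G" "y \<in> carrier G"
  shows "inv x \<otimes> (x \<otimes> y) = y" "x \<otimes> (inv x \<otimes> y) = y"
  using assms by (simp_all add: m_assoc[symmetric])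

lemma (in group) comm_gen_eq:
  assumes h: "h \<in> carrier G" and g: "g \<in> carrier G"
  shows "h \<otimes> g \<otimes> inv h \<otimes> inv g \<otimes> (g \<otimes> h) = h \<otimes> g"
  using h g by (simp add: m_assoc)

lemma (in group) comm_gen_eq2:
  assumes h: "h \<in> carrier G" and g: "g \<in> carrier G"
  shows "h \<otimes> g \<otimes> inv h \<otimes> inv g = (h \<otimes> g) \<otimes> inv (g \<otimes> h)"
  using h g by (simp add: m_assoc inv_mult_group)

lemma (in group) comm_conj:
  assumes h: "h \<in> carrier G" and g: "g \<in> carrier G" and x: "x \<in> carrier G"
  shows "g \<otimes> (h \<otimes> x \<otimes> inv h \<otimes> inv x) \<otimes> inv g
       = inv (h \<otimes> g \<otimes> inv h \<otimes> inv g) \<otimes> (h \<otimes> (g \<otimes> x) \<otimes> inv h \<otimes> inv (g \<otimes> x))"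
  using h g x by (simp add: m_assoc inv_mult_group)

lemma (in group) comm_set_carrier:
  assumes H: "H \<subseteq> carrier G"
  shows "(\<Union>h\<in>H. \<Union>k\<in>carrier G. {h \<otimes> k \<otimes> inv h \<otimes> inv k}) \<subseteq> carrier G"
  using H by auto

lemma (in group) comm_normal:
  assumes H: "H \<subseteq> carrier G"
  shows "commutator_subgroup G H (carrier G) \<lhd> G"
  unfolding commutator_subgroup_def
proof (rule normal_invI[OF generate_is_subgroup[OF comm_set_carrier[OF H]]])
  let ?S = "(\<Union>h\<in>H. \<Union>k\<in>carrier G. {h \<otimes> k \<otimes> inv h \<otimes> inv k})"
  fix g h assume g: "g \<in> carrier G"
  have conjS: "g \<otimes> h \<otimes> inv g \<in> generate G ?S" if incl: "h \<in> ?S" for h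
  proof -
    from incl obtain a x where a: "a \<in> H" and x: "x \<in> carrier G" and hdef: "h = a \<otimes> x \<otimes> inv a \<otimes> inv x"
      by auto
    have a': "a \<in> carrier G" using a H by auto
    have c1: "a \<otimes> g \<otimes> inv a \<otimes> inv g \<in> ?S" using a g by auto
    have c2: "a \<otimes> (g \<otimes> x) \<otimes> inv a \<otimes> inv (g \<otimes> x) \<in> ?S" using a g x by auto
    have "g \<otimes> h \<otimes> inv g = inv (a \<otimes> g \<otimes> inv a \<otimes> inv g) \<otimes> (a \<otimes> (g \<otimes> x) \<otimes> inv a \<otimes> inv (g \<otimes> x))"
      unfolding hdef by (rule comm_conj[OF a' g x])
    thus ?thesis using generate.eng[OF generate.inv[OF c1] generate.incl[OF c2]] by simp
  qed
  show "h \<in> generate G ?S \<Longrightarrow> g \<otimes> h \<otimes> inv g \<in> generate G ?S"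
  proof (induct h rule: generate.induct)
    case one thus ?case using g generate.one by auto
  next
    case (incl h)
    thus ?case using conjS by auto
  next
    case (inv h)
    hence h: "h \<in> carrier G" using comm_set_carrier[OF H] by auto
    hence "inv (g \<otimes> h \<otimes> (inv g)) = g \<otimes> (inv h) \<otimes> (inv g)"
      using g by (simp add: inv_mult_group m_assoc)
    thus ?case
      using generate_m_inv_closed[OF comm_set_carrier[OF H] conjS[OF inv]] by simp
  next
    case (eng h1 h2)
    note in_carrier = eng(1,3)[THEN generate_in_carrier[OF comm_set_carrier[OF H]]]
    have "g \<otimes> (h1 \<otimes> h2) \<otimes> inv g = (g \<otimes> h1 \<otimes> inv g) \<otimes> (g \<otimes> h2 \<otimes> inv g)"
      using in_carrier g by (simp add: m_assoc)
    thus ?case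
      using generate.eng[OF eng(2,4)] by simp
  qed
qed

lemma irr_rep_rep: "irr_rep G n \<rho> \<Longrightarrow> rep G n \<rho>"
  unfolding irr_rep_def by auto

lemma irr_rep_pos: "irr_rep G n \<rho> \<Longrightarrow> n > 0"
  unfolding irr_rep_def by auto

lemma (in group) comm_ker_center:
  assumes fin: "finite (carrier G)" and irr: "irr_rep G n \<rho>" and H: "H \<subseteq> carrier G"
    and ck: "commutator_subgroup G H (carrier G) \<subseteq> char_kernel G (chr G \<rho>)"
  shows "H \<subseteq> char_center G (chr G \<rho>)"
proof
  note rep = irr_rep_rep[OF irr]
  fix h assume hH: "h \<in> H"
  hence h: "h \<in> carrier G" using H by auto
  have comm: "\<rho> h * \<rho> g = \<rho> g * \<rho> h" if g: "g \<in> carrier G" for g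
  proof -
    let ?c = "h \<otimes> g \<otimes> inv h \<otimes> inv g"
    have "?c \<in> commutator_subgroup G H (carrier G)"
      unfolding commutator_subgroup_def using hH g by (intro generate.incl) auto
    hence "?c \<in> char_kernel G (chr G \<rho>)" using ck by auto
    hence rc: "\<rho> ?c = 1\<^sub>m n" and c: "?c \<in> carrier G"
      unfolding kernel_chr[OF is_group rep fin] by auto
    have "\<rho> h * \<rho> g = \<rho> (h \<otimes> g)" using rep_mult[OF is_group rep h g] by simp
    also have "h \<otimes> g = ?c \<otimes> (g \<otimes> h)" using comm_gen_eq[OF h g] by simp
    also have "\<rho> (?c \<otimes> (g \<otimes> h)) = \<rho> ?c * \<rho> (g \<otimes> h)" using rep_mult[OF is_group rep c] g h by simp
    also have "\<dots> = \<rho> g * \<rho> h" using rc rep_mult[OF is_group rep g h]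
        left_mult_one_mat[OF mult_carrier_mat[OF rep_carrier[OF is_group rep g] rep_carrier[OF is_group rep h]]]
      by simp
    finally show ?thesis .
  qed
  obtain e where e: "\<rho> h = e \<cdot>\<^sub>m 1\<^sub>m n"
    using schur_scalar[OF irr rep_carrier[OF is_group rep h] comm] by auto
  show "h \<in> char_center G (chr G \<rho>)" unfolding center_chr[OF is_group rep fin] using h e by auto
qed

lemma (in group) ker_subgroup:
  assumes rep: "rep G n \<rho>"
  shows "subgroup {g \<in> carrier G. \<rho> g = 1\<^sub>m n} G"
proof (rule subgroupI)
  show "{g \<in> carrier G. \<rho> g = 1\<^sub>m n} \<noteq> {}" using rep_one[OF is_group rep] by auto
next
  fix a assume a: "a \<in> {g \<in> carrier G. \<rho> g = 1\<^sub>m n}"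
  hence a': "a \<in> carrier G" "\<rho> a = 1\<^sub>m n" by auto
  hence "\<rho> (inv a) * 1\<^sub>m n = 1\<^sub>m n" using rep_inv(1)[OF is_group rep a'(1)] by simp
  hence "\<rho> (inv a) = 1\<^sub>m n" using a right_mult_one_mat[OF rep_carrier[OF is_group rep, of "inv a"]] by auto
  thus "inv a \<in> {g \<in> carrier G. \<rho> g = 1\<^sub>m n}" using a by auto
next
  fix a b assume "a \<in> {g \<in> carrier G. \<rho> g = 1\<^sub>m n}" "b \<in> {g \<in> carrier G. \<rho> g = 1\<^sub>m n}"
  thus "a \<otimes> b \<in> {g \<in> carrier G. \<rho> g = 1\<^sub>m n}" using rep_mult[OF is_group rep] by auto
qed auto

lemma (in group) center_comm_ker:
  assumes fin: "finite (carrier G)" and irr: "irr_rep G n \<rho>"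
  shows "commutator_subgroup G (char_center G (chr G \<rho>)) (carrier G) \<subseteq> char_kernel G (chr G \<rho>)"
proof -
  note rep = irr_rep_rep[OF irr]
  show ?thesis
    unfolding commutator_subgroup_def kernel_chr[OF is_group rep fin]
  proof (rule generate_subgroup_incl[OF _ ker_subgroup[OF rep]], intro subsetI)
    fix x assume "x \<in> (\<Union>h\<in>char_center G (chr G \<rho>). \<Union>k\<in>carrier G. {h \<otimes> k \<otimes> inv h \<otimes> inv k})"
    then obtain h g where hZ: "h \<in> char_center G (chr G \<rho>)" and g: "g \<in> carrier G"
      and x: "x = h \<otimes> g \<otimes> inv h \<otimes> inv g" by auto
    from hZ obtain c where h: "h \<in> carrier G" and c: "\<rho> h = c \<cdot>\<^sub>m 1\<^sub>m n"
      unfolding center_chr[OF is_group rep fin] by auto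
    have Rg: "\<rho> g \<in> carrier_mat n n" using rep_carrier[OF is_group rep g] .
    have "\<rho> (h \<otimes> g) = \<rho> (g \<otimes> h)"
      using rep_mult[OF is_group rep h g] rep_mult[OF is_group rep g h] c smult_one_mult[OF Rg] by simp
    have "\<rho> x = \<rho> (h \<otimes> g) * \<rho> (inv (g \<otimes> h))"
      unfolding x comm_gen_eq2[OF h g] using rep_mult[OF is_group rep] h g by simp
    also have "\<dots> = 1\<^sub>m n" using \<open>\<rho> (h \<otimes> g) = \<rho> (g \<otimes> h)\<close> rep_inv(2)[OF is_group rep, of "g \<otimes> h"] g h
      by simp
    finally show "x \<in> {g \<in> carrier G. \<rho> g = 1\<^sub>m n}" using x h g by auto
  qed
qed

lemma (in group) center_subgroup:
  assumes fin: "finite (carrier G)" and irr: "irr_rep G n \<rho>"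
  shows "subgroup (char_center G (chr G \<rho>)) G"
proof -
  note rep = irr_rep_rep[OF irr]
  have n: "n > 0" using irr_rep_pos[OF irr] .
  show ?thesis unfolding center_chr[OF is_group rep fin]
  proof (rule subgroupI)
    show "{g \<in> carrier G. \<exists>c. \<rho> g = c \<cdot>\<^sub>m 1\<^sub>m n} \<noteq> {}"
      using rep_one[OF is_group rep] by (auto intro!: exI[of _ 1])
  next
    fix a assume a: "a \<in> {g \<in> carrier G. \<exists>c. \<rho> g = c \<cdot>\<^sub>m 1\<^sub>m n}"
    then obtain c where a': "a \<in> carrier G" and c: "\<rho> a = c \<cdot>\<^sub>m 1\<^sub>m n" by auto
    have R: "\<rho> (inv a) \<in> carrier_mat n n" using rep_carrier[OF is_group rep] a' by auto
    have "\<rho> (inv a) * \<rho> a = 1\<^sub>m n" using rep_inv[OF is_group rep a'] by auto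
    hence eq: "c \<cdot>\<^sub>m \<rho> (inv a) = 1\<^sub>m n" using c smult_one_mult[OF R] by simp
    have "c * \<rho> (inv a) $$ (0,0) = 1" using arg_cong[OF eq, of "\<lambda>M. M $$ (0,0)"] R n by simp
    hence c0: "c \<noteq> 0" by auto
    have "\<rho> (inv a) = inverse c \<cdot>\<^sub>m 1\<^sub>m n"
    proof (rule eq_matI)
      fix i j assume "i < dim_row (inverse c \<cdot>\<^sub>m 1\<^sub>m n)" "j < dim_col (inverse c \<cdot>\<^sub>m 1\<^sub>m n)"
      hence ij: "i < n" "j < n" by auto
      have "c * \<rho> (inv a) $$ (i,j) = (if i = j then 1 else 0)"
        using arg_cong[OF eq, of "\<lambda>M. M $$ (i,j)"] R ij by simp
      thus "\<rho> (inv a) $$ (i,j) = (inverse c \<cdot>\<^sub>m 1\<^sub>m n) $$ (i,j)" using ij c0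
        by (auto simp: field_simps split: if_splits)
    qed (use R in auto)
    thus "inv a \<in> {g \<in> carrier G. \<exists>c. \<rho> g = c \<cdot>\<^sub>m 1\<^sub>m n}" using a' by auto
  next
    fix a b assume a: "a \<in> {g \<in> carrier G. \<exists>c. \<rho> g = c \<cdot>\<^sub>m 1\<^sub>m n}"
      and b: "b \<in> {g \<in> carrier G. \<exists>c. \<rho> g = c \<cdot>\<^sub>m 1\<^sub>m n}"
    then obtain c d where a': "a \<in> carrier G" and c: "\<rho> a = c \<cdot>\<^sub>m 1\<^sub>m n"
      and b': "b \<in> carrier G" and d: "\<rho> b = d \<cdot>\<^sub>m 1\<^sub>m n" by auto
    have "\<rho> (a \<otimes> b) = (c * d) \<cdot>\<^sub>m 1\<^sub>m n"
      using rep_mult[OF is_group rep a' b'] c d smult_one_mult[of "d \<cdot>\<^sub>m 1\<^sub>m n" n c]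
      by (auto intro!: eq_matI)
    thus "a \<otimes> b \<in> {g \<in> carrier G. \<exists>c. \<rho> g = c \<cdot>\<^sub>m 1\<^sub>m n}" using a' b' by auto
  qed auto
qed

lemma delta_1: "delta G (Suc 0) = carrier G" by (simp add: delta.simps)

lemma delta_SS: "delta G (Suc (Suc i)) =
   generate G (\<Union>\<chi>\<in>Irr_over G (commutator_subgroup G (delta G (Suc i)) (carrier G)). char_center G \<chi>)"
  by (simp add: delta.simps)

declare delta.simps [simp del]

lemma delta_0: "delta G 0 = carrier G" by (simp add: delta.simps)

lemma Irr_over_mono: "N \<subseteq> N' \<Longrightarrow> Irr_over G N \<subseteq> Irr_over G N'"
  unfolding Irr_over_def by auto

lemma (in group) delta_carrier: "delta G k \<subseteq> carrier G"
proof (cases k)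
  case 0 thus ?thesis by (simp add: delta_0)
next
  case (Suc i)
  show ?thesis
  proof (cases "i = 0")
    case True thus ?thesis using Suc by (simp add: delta_1)
  next
    case False
    have "(\<Union>\<chi>\<in>Irr_over G (commutator_subgroup G (delta G i) (carrier G)). char_center G \<chi>) \<subseteq> carrier G"
      unfolding char_center_def by auto
    thus ?thesis using Suc False generate_in_carrier by (auto simp: delta.simps)
  qed
qed

lemma (in group) comm_mono: "H \<subseteq> H' \<Longrightarrow> commutator_subgroup G H K \<subseteq> commutator_subgroup G H' K"
  unfolding commutator_subgroup_def by (rule mono_generate) auto

lemma (in group) delta_dec: "i \<ge> 1 \<Longrightarrow> delta G (Suc i) \<subseteq> delta G i"
proof (induct i)
  case 0 thus ?case by simp
next
  case (Suc i)
  show ?case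
  proof (cases "i = 0")
    case True thus ?thesis using delta_carrier[of "Suc (Suc 0)"] by (simp add: delta_1)
  next
    case False
    then obtain j where ij: "i = Suc j" by (cases i) auto
    have IH: "delta G (Suc i) \<subseteq> delta G i" using Suc False by auto
    have "Irr_over G (commutator_subgroup G (delta G (Suc i)) (carrier G))
        \<subseteq> Irr_over G (commutator_subgroup G (delta G i) (carrier G))"
      by (rule Irr_over_mono[OF comm_mono[OF IH]])
    hence "delta G (Suc (Suc i)) \<subseteq> delta G (Suc (Suc j))"
      unfolding delta_SS ij by (intro mono_generate) blast
    thus ?thesis using ij by simp
  qed
qed

lemma (in group) delta_antimono: assumes "1 \<le> k" "k \<le> j" shows "delta G j \<subseteq> delta G k"
  using assms(2)
proof (induct j rule: dec_induct)
  case base thus ?case by simp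
next
  case (step j)
  thus ?case using delta_dec[of j] assms(1) by auto
qed

lemma (in group) delta_chain: "1 \<le> k \<Longrightarrow> 1 \<le> j \<Longrightarrow> delta G j \<subseteq> delta G k \<or> delta G k \<subseteq> delta G j"
  using delta_antimono[of k j] delta_antimono[of j k] by (cases "k \<le> j") auto

lemma (in group) delta_stab:
  assumes fin: "finite (carrier G)"
  shows "\<exists>K\<ge>1. \<forall>j\<ge>K. delta G j = delta G K"
proof -
  define f where "f k = card (delta G (Suc k))" for k
  define m where "m = (LEAST v. \<exists>k. v = f k)"
  have "\<exists>k. m = f k" unfolding m_def by (rule LeastI_ex) auto
  then obtain k0 where k0: "m = f k0" by auto
  have mle: "m \<le> f k" for k unfolding m_def by (rule Least_le) auto
  show ?thesis
  proof (intro exI[of _ "Suc k0"] conjI allI impI)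
    fix j assume j: "j \<ge> Suc k0"
    have sub: "delta G j \<subseteq> delta G (Suc k0)" by (rule delta_antimono) (use j in auto)
    have finK: "finite (delta G (Suc k0))" using fin delta_carrier finite_subset by blast
    have "card (delta G (Suc k0)) \<le> card (delta G j)"
      using mle[of "j - 1"] k0 j unfolding f_def by auto
    hence "card (delta G j) = card (delta G (Suc k0))" using card_mono[OF finK sub] by auto
    thus "delta G j = delta G (Suc k0)" using card_subset_eq[OF finK sub] by auto
  qed simp
qed

lemma (in group) delta_inf_prop:
  assumes fin: "finite (carrier G)"
  obtains K where "K \<ge> 1" "\<forall>j\<ge>K. delta G j = delta G K" "delta_inf G = delta G K"
proof -
  let ?P = "\<lambda>k. 1 \<le> k \<and> (\<forall>j\<ge>k. delta G j = delta G k)"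
  obtain K0 where "?P K0" using delta_stab[OF fin] by blast
  hence P: "?P (LEAST k. ?P k)" by (rule LeastI)
  have di: "delta_inf G = delta G (LEAST k. ?P k)" unfolding delta_inf_def ..
  show ?thesis
  proof (rule that)
    show "1 \<le> (LEAST k. ?P k)" using P by (rule conjunct1)
    show "\<forall>j\<ge>(LEAST k. ?P k). delta G j = delta G (LEAST k. ?P k)" using P by (rule conjunct2)
    show "delta_inf G = delta G (LEAST k. ?P k)" by (rule di)
  qed
qed

lemma chr_Irr: "irr_rep G n \<rho> \<Longrightarrow> chr G \<rho> \<in> Irr G"
  unfolding Irr_def chr_def by blast

lemma (in group) center_is_delta:
  assumes fin: "finite (carrier G)" and irr: "irr_rep G n \<rho>" and i: "i \<ge> 1"
    and ck: "commutator_subgroup G (delta G i) (carrier G) \<subseteq> char_kernel G (chr G \<rho>)"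
  shows "\<exists>k\<ge>1. char_center G (chr G \<rho>) = delta G k"
proof -
  let ?P = "\<lambda>k. 1 \<le> k \<and> commutator_subgroup G (delta G k) (carrier G) \<subseteq> char_kernel G (chr G \<rho>)"
  define k where "k = (LEAST k. ?P k)"
  have Pk: "?P k" unfolding k_def by (rule LeastI[of ?P i]) (use i ck in auto)
  have sub1: "delta G k \<subseteq> char_center G (chr G \<rho>)"
    using comm_ker_center[OF fin irr delta_carrier, of k] Pk by blast
  have sub2: "char_center G (chr G \<rho>) \<subseteq> delta G k"
  proof (cases "k = 1")
    case True thus ?thesis unfolding char_center_def by (auto simp: delta_1)
  next
    case False
    then obtain j where kj: "k = Suc j" and j: "j \<ge> 1" using Pk by (cases k) auto
    have "\<not> ?P j" using kj unfolding k_def by (intro not_less_Least) auto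
    hence "\<not> commutator_subgroup G (delta G j) (carrier G) \<subseteq> char_kernel G (chr G \<rho>)" using j by auto
    hence "chr G \<rho> \<in> Irr_over G (commutator_subgroup G (delta G j) (carrier G))"
      unfolding Irr_over_def using chr_Irr[OF irr] by auto
    moreover obtain j' where jj: "j = Suc j'" using j by (cases j) auto
    ultimately have mem: "chr G \<rho> \<in> Irr_over G (commutator_subgroup G (delta G (Suc j')) (carrier G))"
      by simp
    have eq: "delta G k = generate G (\<Union>\<chi>\<in>Irr_over G (commutator_subgroup G (delta G (Suc j')) (carrier G)). char_center G \<chi>)"
      unfolding kj jj by (rule delta_SS)
    show ?thesis
    proof
      fix x assume "x \<in> char_center G (chr G \<rho>)"
      hence "x \<in> (\<Union>\<chi>\<in>Irr_over G (commutator_subgroup G (delta G (Suc j')) (carrier G)). char_center G \<chi>)"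
        using mem by blast
      thus "x \<in> delta G k" unfolding eq by (rule generate.incl)
    qed
  qed
  have "char_center G (chr G \<rho>) = delta G k" by (rule equalityI[OF sub2 sub1])
  thus ?thesis using Pk by blast
qed

lemma (in group) quotient_lift:
  assumes fin: "finite (carrier G)" and N: "N \<lhd> G" and chi: "\<chi>' \<in> Irr (G Mod N)"
  shows "\<exists>n \<rho>. irr_rep G n \<rho> \<and> N \<subseteq> char_kernel G (chr G \<rho>) \<and>
           char_center (G Mod N) \<chi>' = (\<lambda>g. N #> g) ` char_center G (chr G \<rho>)"
proof -
  interpret Nn: normal N G by (rule N)
  from chi obtain n \<sigma> where irr: "irr_rep (G Mod N) n \<sigma>"
    and chid: "\<chi>' = (\<lambda>c. if c \<in> carrier (G Mod N) then mat_trace (\<sigma> c) else 0)"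
    unfolding Irr_def by auto
  define \<rho> where "\<rho> = (\<lambda>g. \<sigma> (N #> g))"
  have Nsub: "N \<subseteq> carrier G" using Nn.subset .
  have cos: "\<And>g. g \<in> carrier G \<Longrightarrow> N #> g \<in> carrier (G Mod N)"
    unfolding FactGroup_def using rcosetsI[OF Nsub] by simp
  have carrQ: "carrier (G Mod N) = (\<lambda>g. N #> g) ` carrier G"
    unfolding FactGroup_def RCOSETS_def by auto
  have oneQ: "\<one>\<^bsub>G Mod N\<^esub> = N" by (simp add: FactGroup_def)
  have multQ: "\<And>A B. A \<otimes>\<^bsub>G Mod N\<^esub> B = A <#> B" by (simp add: FactGroup_def)
  have N1: "N #> \<one> = N" by (rule coset_mult_one[OF Nsub])
  from irr have srep: "rep (G Mod N) n \<sigma>" and n: "n > 0"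
    and sirr: "\<And>W. invariant_subspace (G Mod N) n \<sigma> W \<Longrightarrow> W = {0\<^sub>v n} \<or> W = carrier_vec n"
    unfolding irr_rep_def by auto
  have scar: "\<And>c. c \<in> carrier (G Mod N) \<Longrightarrow> \<sigma> c \<in> carrier_mat n n"
    using srep unfolding rep_def by auto
  have smult: "\<And>c d. c \<in> carrier (G Mod N) \<Longrightarrow> d \<in> carrier (G Mod N) \<Longrightarrow> \<sigma> (c \<otimes>\<^bsub>G Mod N\<^esub> d) = \<sigma> c * \<sigma> d"
    using srep unfolding rep_def by auto
  have sone: "\<sigma> N = 1\<^sub>m n" using srep oneQ unfolding rep_def by auto
  have rep: "rep G n \<rho>" unfolding rep_def
  proof (intro conjI ballI)
    fix g assume g: "g \<in> carrier G"
    show "\<rho> g \<in> carrier_mat n n" unfolding \<rho>_def using scar[OF cos[OF g]] .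
  next
    fix g h assume g: "g \<in> carrier G" and h: "h \<in> carrier G"
    have "\<rho> (g \<otimes> h) = \<sigma> ((N #> g) <#> (N #> h))" unfolding \<rho>_def using Nn.rcos_sum[OF g h] by simp
    also have "\<dots> = \<sigma> ((N #> g) \<otimes>\<^bsub>G Mod N\<^esub> (N #> h))" using multQ by simp
    also have "\<dots> = \<rho> g * \<rho> h" unfolding \<rho>_def using smult[OF cos[OF g] cos[OF h]] .
    finally show "\<rho> (g \<otimes> h) = \<rho> g * \<rho> h" .
  next
    show "\<rho> \<one> = 1\<^sub>m n" unfolding \<rho>_def N1 sone ..
  qed
  have irrG: "irr_rep G n \<rho>" unfolding irr_rep_def
  proof (intro conjI allI impI rep n)
    fix W assume W: "invariant_subspace G n \<rho> W"
    have "invariant_subspace (G Mod N) n \<sigma> W"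
      unfolding invariant_subspace_def
    proof (intro conjI ballI allI)
      show "W \<subseteq> carrier_vec n" "0\<^sub>v n \<in> W" using W unfolding invariant_subspace_def by auto
      show "\<And>v w. v \<in> W \<Longrightarrow> w \<in> W \<Longrightarrow> v + w \<in> W" using W unfolding invariant_subspace_def by auto
      show "\<And>c v. v \<in> W \<Longrightarrow> c \<cdot>\<^sub>v v \<in> W" using W unfolding invariant_subspace_def by auto
    next
      fix c v assume c: "c \<in> carrier (G Mod N)" and v: "v \<in> W"
      then obtain g where g: "g \<in> carrier G" and cg: "c = N #> g" using carrQ by auto
      have "\<rho> g *\<^sub>v v \<in> W" using W g v unfolding invariant_subspace_def by auto
      thus "\<sigma> c *\<^sub>v v \<in> W" unfolding cg \<rho>_def .
    qed
    thus "W = {0\<^sub>v n} \<or> W = carrier_vec n" by (rule sirr)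
  qed
  have ker: "N \<subseteq> char_kernel G (chr G \<rho>)"
  proof
    fix x assume x: "x \<in> N"
    have xc: "x \<in> carrier G" using x Nsub by auto
    have "N #> x = N" using Nn.rcos_const[OF is_group x] .
    hence "\<rho> x = 1\<^sub>m n" unfolding \<rho>_def using sone by simp
    thus "x \<in> char_kernel G (chr G \<rho>)" unfolding kernel_chr[OF is_group rep fin] using xc by auto
  qed
  have chv: "\<And>g. g \<in> carrier G \<Longrightarrow> \<chi>' (N #> g) = chr G \<rho> g"
    unfolding chid chr_def \<rho>_def using cos by auto
  have ch1: "\<chi>' \<one>\<^bsub>G Mod N\<^esub> = chr G \<rho> \<one>"
    using chv[OF one_closed] N1 oneQ by simp
  have cen: "char_center (G Mod N) \<chi>' = (\<lambda>g. N #> g) ` char_center G (chr G \<rho>)"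
  proof (rule Set.set_eqI)
    fix c
    show "c \<in> char_center (G Mod N) \<chi>' \<longleftrightarrow> c \<in> (\<lambda>g. N #> g) ` char_center G (chr G \<rho>)"
    proof
      assume "c \<in> char_center (G Mod N) \<chi>'"
      hence c: "c \<in> carrier (G Mod N)" and cm: "cmod (\<chi>' c) = cmod (\<chi>' \<one>\<^bsub>G Mod N\<^esub>)"
        unfolding char_center_def by auto
      then obtain g where g: "g \<in> carrier G" and cg: "c = N #> g" using carrQ by auto
      have "g \<in> char_center G (chr G \<rho>)"
        unfolding char_center_def using g cm chv[OF g] ch1 cg by auto
      thus "c \<in> (\<lambda>g. N #> g) ` char_center G (chr G \<rho>)" using cg by auto
    next
      assume "c \<in> (\<lambda>g. N #> g) ` char_center G (chr G \<rho>)"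
      then obtain g where gZ: "g \<in> char_center G (chr G \<rho>)" and cg: "c = N #> g" by auto
      hence g: "g \<in> carrier G" and cm: "cmod (chr G \<rho> g) = cmod (chr G \<rho> \<one>)"
        unfolding char_center_def by auto
      show "c \<in> char_center (G Mod N) \<chi>'"
        unfolding char_center_def using cos[OF g] cm chv[OF g] ch1 cg by auto
    qed
  qed
  show ?thesis using irrG ker cen by blast
qed

lemma (in group) comm_one_ker:
  assumes fin: "finite (carrier G)" and irr: "irr_rep G n \<rho>"
  shows "commutator_subgroup G {\<one>} (carrier G) \<subseteq> char_kernel G (chr G \<rho>)"
proof -
  note rep = irr_rep_rep[OF irr]
  show ?thesis
    unfolding commutator_subgroup_def kernel_chr[OF is_group rep fin]
  proof (rule generate_subgroup_incl[OF _ ker_subgroup[OF rep]], intro subsetI)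
    fix x assume "x \<in> (\<Union>h\<in>{\<one>}. \<Union>k\<in>carrier G. {h \<otimes> k \<otimes> inv h \<otimes> inv k})"
    then obtain k where k: "k \<in> carrier G" and x: "x = \<one> \<otimes> k \<otimes> inv \<one> \<otimes> inv k" by auto
    have "x = \<one>" using k x by simp
    thus "x \<in> {g \<in> carrier G. \<rho> g = 1\<^sub>m n}" using rep_one[OF is_group rep] by simp
  qed
qed

lemma (in group) nested_if_all_delta:
  assumes all: "\<And>\<chi>. \<chi> \<in> Irr G \<Longrightarrow> \<exists>k\<ge>1. char_center G \<chi> = delta G k"
  shows "nested_group G"
  unfolding nested_group_def
proof (intro ballI)
  fix \<chi> \<psi> assume c: "\<chi> \<in> Irr G" and p: "\<psi> \<in> Irr G"
  obtain k where k: "k \<ge> 1" "char_center G \<chi> = delta G k" using all[OF c] by blast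
  obtain k' where k': "k' \<ge> 1" "char_center G \<psi> = delta G k'" using all[OF p] by blast
  show "char_center G \<chi> \<subseteq> char_center G \<psi> \<or> char_center G \<psi> \<subseteq> char_center G \<chi>"
    unfolding k(2) k'(2) using delta_chain[OF k(1) k'(1)] by blast
qed

theorem theoremG:
  fixes G :: "('a, 'b) monoid_scheme"
  assumes "group G" and "finite (carrier G)"
  shows "(\<forall>i::nat. i \<ge> 1 \<longrightarrow>
            nested_group (G Mod (commutator_subgroup G (delta G i) (carrier G))))
       \<and> (nested_group G \<longleftrightarrow> delta_inf G = {\<one>\<^bsub>G\<^esub>})"
proof -
  interpret group G by (rule assms(1))
  note fin = assms(2)
  have part1: "nested_group (G Mod (commutator_subgroup G (delta G i) (carrier G)))" if i: "i \<ge> 1" for i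
  proof -
    let ?N = "commutator_subgroup G (delta G i) (carrier G)"
    have N: "?N \<lhd> G" by (rule comm_normal[OF delta_carrier])
    have lift: "\<exists>k\<ge>1. char_center (G Mod ?N) \<chi>' = (\<lambda>g. ?N #>\<^bsub>G\<^esub> g) ` delta G k"
      if c: "\<chi>' \<in> Irr (G Mod ?N)" for \<chi>'
    proof -
      obtain n \<rho> where irr: "irr_rep G n \<rho>" and ker: "?N \<subseteq> char_kernel G (chr G \<rho>)"
        and cen: "char_center (G Mod ?N) \<chi>' = (\<lambda>g. ?N #>\<^bsub>G\<^esub> g) ` char_center G (chr G \<rho>)"
        using quotient_lift[OF fin N c] by blast
      obtain k where k1: "k \<ge> 1" and kd: "char_center G (chr G \<rho>) = delta G k"
        using center_is_delta[OF fin irr i ker] by blast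
      show ?thesis using k1 unfolding cen kd by blast
    qed
    show ?thesis unfolding nested_group_def
    proof (intro ballI)
      fix \<chi> \<psi> assume c: "\<chi> \<in> Irr (G Mod ?N)" and p: "\<psi> \<in> Irr (G Mod ?N)"
      obtain k where k: "k \<ge> 1" "char_center (G Mod ?N) \<chi> = (\<lambda>g. ?N #>\<^bsub>G\<^esub> g) ` delta G k"
        using lift[OF c] by blast
      obtain k' where k': "k' \<ge> 1" "char_center (G Mod ?N) \<psi> = (\<lambda>g. ?N #>\<^bsub>G\<^esub> g) ` delta G k'"
        using lift[OF p] by blast
      show "char_center (G Mod ?N) \<chi> \<subseteq> char_center (G Mod ?N) \<psi> \<or>
            char_center (G Mod ?N) \<psi> \<subseteq> char_center (G Mod ?N) \<chi>"
        unfolding k(2) k'(2)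
      proof (rule disjE[OF delta_chain[OF k(1) k'(1)]])
        assume "delta G k' \<subseteq> delta G k"
        hence "(\<lambda>g. ?N #>\<^bsub>G\<^esub> g) ` delta G k' \<subseteq> (\<lambda>g. ?N #>\<^bsub>G\<^esub> g) ` delta G k" by (rule image_mono)
        thus "(\<lambda>g. ?N #>\<^bsub>G\<^esub> g) ` delta G k \<subseteq> (\<lambda>g. ?N #>\<^bsub>G\<^esub> g) ` delta G k' \<or>
              (\<lambda>g. ?N #>\<^bsub>G\<^esub> g) ` delta G k' \<subseteq> (\<lambda>g. ?N #>\<^bsub>G\<^esub> g) ` delta G k" by (rule disjI2)
      next
        assume "delta G k \<subseteq> delta G k'"
        hence "(\<lambda>g. ?N #>\<^bsub>G\<^esub> g) ` delta G k \<subseteq> (\<lambda>g. ?N #>\<^bsub>G\<^esub> g) ` delta G k'" by (rule image_mono)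
        thus "(\<lambda>g. ?N #>\<^bsub>G\<^esub> g) ` delta G k \<subseteq> (\<lambda>g. ?N #>\<^bsub>G\<^esub> g) ` delta G k' \<or>
              (\<lambda>g. ?N #>\<^bsub>G\<^esub> g) ` delta G k' \<subseteq> (\<lambda>g. ?N #>\<^bsub>G\<^esub> g) ` delta G k" by (rule disjI1)
      qed
    qed
  qed
  obtain K where K1: "K \<ge> 1" and Kst: "\<forall>j\<ge>K. delta G j = delta G K" and dinf: "delta_inf G = delta G K"
    using delta_inf_prop[OF fin] by blast
  obtain K' where KK: "K = Suc K'" using K1 by (cases K) auto
  have part2: "nested_group G \<longleftrightarrow> delta_inf G = {\<one>\<^bsub>G\<^esub>}"
  proof
    assume d1: "delta_inf G = {\<one>\<^bsub>G\<^esub>}"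
    show "nested_group G"
    proof (rule nested_if_all_delta)
      fix \<chi> assume c: "\<chi> \<in> Irr G"
      obtain n \<rho> where irr: "irr_rep G n \<rho>" and chi: "\<chi> = chr G \<rho>" using IrrE[OF c] by blast
      have "commutator_subgroup G (delta G K) (carrier G) \<subseteq> char_kernel G (chr G \<rho>)"
        using comm_one_ker[OF fin irr] d1 dinf by simp
      thus "\<exists>k\<ge>1. char_center G \<chi> = delta G k" using center_is_delta[OF fin irr K1] chi by blast
    qed
  next
    assume nest: "nested_group G"
    let ?S = "Irr_over G (commutator_subgroup G (delta G K) (carrier G))"
    have dS: "delta G (Suc K) = generate G (\<Union>\<chi>\<in>?S. char_center G \<chi>)"
      unfolding KK by (rule delta_SS)
    have dK: "delta G K = delta G (Suc K)" using spec[OF Kst, of "Suc K"] by simp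
    show "delta_inf G = {\<one>\<^bsub>G\<^esub>}"
    proof (cases "?S = {}")
      case True
      hence "(\<Union>\<chi>\<in>?S. char_center G \<chi>) = {}" by simp
      hence "delta G (Suc K) = {\<one>\<^bsub>G\<^esub>}" unfolding dS using generate_empty by simp
      thus ?thesis using dK dinf by simp
    next
      case False
      let ?C = "card ` char_center G ` ?S"
      have finC: "finite ?C"
      proof (rule finite_subset)
        show "?C \<subseteq> {..card (carrier G)}"
        proof
          fix x assume "x \<in> ?C"
          then obtain \<chi> where x: "x = card (char_center G \<chi>)" by blast
          have "char_center G \<chi> \<subseteq> carrier G" unfolding char_center_def by blast
          thus "x \<in> {..card (carrier G)}" using card_mono[OF fin] x by simp
        qed
      qed simp
      have "Max ?C \<in> ?C" using finC False by (intro Max_in) auto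
      then obtain \<chi>0 where c0: "\<chi>0 \<in> ?S" and m0: "card (char_center G \<chi>0) = Max ?C" by auto
      have all_le: "char_center G \<chi> \<subseteq> char_center G \<chi>0" if c: "\<chi> \<in> ?S" for \<chi>
      proof -
        have inIrr: "\<chi> \<in> Irr G" "\<chi>0 \<in> Irr G" using c c0 unfolding Irr_over_def by auto
        have le1: "card (char_center G \<chi>) \<le> Max ?C" using finC c by (intro Max_ge) auto
        have le2: "finite (char_center G \<chi>)" using fin unfolding char_center_def by auto
        note le = le1 le2
        have or: "char_center G \<chi> \<subseteq> char_center G \<chi>0 \<or> char_center G \<chi>0 \<subseteq> char_center G \<chi>"
          using nest inIrr unfolding nested_group_def by blast
        show ?thesis
        proof (rule disjE[OF or])
          assume sub: "char_center G \<chi>0 \<subseteq> char_center G \<chi>"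
          have "card (char_center G \<chi>0) \<le> card (char_center G \<chi>)" by (rule card_mono[OF le(2) sub])
          hence "card (char_center G \<chi>0) = card (char_center G \<chi>)" using le(1) m0 by linarith
          hence "char_center G \<chi>0 = char_center G \<chi>" by (rule card_subset_eq[OF le(2) sub])
          thus ?thesis by simp
        qed
      qed
      have c0I: "\<chi>0 \<in> Irr G" using c0 unfolding Irr_over_def by auto
      obtain n \<rho> where irr: "irr_rep G n \<rho>" and chi0: "\<chi>0 = chr G \<rho>" using IrrE[OF c0I] by blast
      have "delta G (Suc K) \<subseteq> char_center G \<chi>0"
        unfolding dS chi0
        by (rule generate_subgroup_incl[OF _ center_subgroup[OF fin irr]]) (use all_le chi0 in auto)
      hence "delta G K \<subseteq> char_center G (chr G \<rho>)" using dK chi0 by simp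
      hence "commutator_subgroup G (delta G K) (carrier G) \<subseteq> commutator_subgroup G (char_center G (chr G \<rho>)) (carrier G)"
        by (rule comm_mono)
      hence "commutator_subgroup G (delta G K) (carrier G) \<subseteq> char_kernel G (chr G \<rho>)"
        using center_comm_ker[OF fin irr] by (rule subset_trans)
      moreover have "\<not> commutator_subgroup G (delta G K) (carrier G) \<subseteq> char_kernel G (chr G \<rho>)"
        using c0 chi0 unfolding Irr_over_def by auto
      ultimately show ?thesis by contradiction
    qed
  qed
  show ?thesis using part1 part2 by blast
qed

end
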